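(* Let $n\ge 1$, $s_1,\dots,s_n\in[0,1)$ and $v_1,\dots,v_n\in\mathbb{R}$, and let $k:=|\{v_1,\dots,v_n\}|$ be the number of distinct values among the $v_i$. Then there exists $t\in\mathbb{R}$ such that $$B(s_1+v_1t,\dots,s_n+v_nt)\ \ge\ \sqrt{k/12}.$$
   Context: For $r\in\mathbb{R}$, $\{r\}:=r-\lfloor r\rfloor$ is the fractional part. For $r_1,\dots,r_n\in\mathbb{R}$ and $0\le a\le b\le 1$ let $N_{a,b}(r_1,\dots,r_n):=|\{i:\{r_i\}\in[a,b]\}|$. The bias is $$B(r_1,\dots,r_n):=\sup_{0\le a\le b\le 1}\big|N_{a,b}(r_1,\dots,r_n)-n(b-a)\big|.$$ (Equivalently, it is $n$ times the usual discrepancy of $\{r_1\},\dots,\{r_n\}$.) *)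

theory Defs
  imports "HOL-Analysis.Analysis"
begin

text \<open>Fractional part {r} = r - floor r (library: frac).
  Sequences r_1..r_n are represented as r :: nat => real with indices 0..n-1.\<close>

definition count_in :: "nat \<Rightarrow> (nat \<Rightarrow> real) \<Rightarrow> real \<Rightarrow> real \<Rightarrow> nat" where
  "count_in n r a b = card {i. i < n \<and> frac (r i) \<in> {a..b}}"

definition bias :: "nat \<Rightarrow> (nat \<Rightarrow> real) \<Rightarrow> real" where
  "bias n r = (SUP ab \<in> {(a, b). 0 \<le> a \<and> a \<le> b \<and> b \<le> 1}.
      \<bar>real (count_in n r (fst ab) (snd ab)) - real n * (snd ab - fst ab)\<bar>)"

end

theory Submission
  imports Defs
begin

lemma ord_abs_sum:
  fixes y :: "nat \<Rightarrow> real"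
  shows "(\<Sum>i<m. \<Sum>j<m. if j \<le> i then y i - y j else y j - y i)
         = 2 * (\<Sum>i<m. (2 * real i - real m + 1) * y i)"
proof (induction m)
  case 0 then show ?case by simp
next
  case (Suc m)
  have e1: "(\<Sum>i<Suc m. \<Sum>j<Suc m. if j \<le> i then y i - y j else y j - y i)
    = (\<Sum>i<m. \<Sum>j<m. if j \<le> i then y i - y j else y j - y i)
      + (\<Sum>i<m. y m - y i) + (\<Sum>j<m. y m - y j)"
    by (simp add: sum.distrib)
  have e2: "(\<Sum>i<Suc m. (2 * real i - real (Suc m) + 1) * y i)
     = (\<Sum>i<m. (2 * real i - real m + 1) * y i) - (\<Sum>i<m. y i) + real m * y m"
    by (simp add: algebra_simps sum.distrib sum_subtractf)
  show ?case unfolding e1 e2 Suc.IH by (simp add: sum_subtractf algebra_simps)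
qed

lemma sum_sq_diff:
  fixes y :: "nat \<Rightarrow> real"
  shows "(\<Sum>i<m. \<Sum>j<m. (y i - y j)^2) = 2 * real m * (\<Sum>i<m. (y i)^2) - 2 * (\<Sum>i<m. y i)^2"
  by (simp add: power2_eq_square algebra_simps sum.distrib sum_subtractf sum_distrib_left sum_distrib_right)

lemma sum_id_real: "(\<Sum>i<m. real i) = real m * (real m - 1) / 2"
  by (induction m) (auto simp: algebra_simps)

lemma sum_sq_real: "(\<Sum>i<m. (real i)^2) = real m * (real m - 1) * (2 * real m - 1) / 6"
  by (induction m) (auto simp: algebra_simps power2_eq_square)

definition PP :: "real \<Rightarrow> real" where "PP y = y^2/2 - y/2 + 1/12"

lemma PP_frac_sorted:
  fixes a b :: real
  assumes "0 \<le> a" "a < 1" "0 \<le> b" "b < 1"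
  shows "PP (frac (a - b)) = (a - b)^2/2 + 1/12 - (if b \<le> a then a - b else b - a)/2"
proof (cases "b \<le> a")
  case True
  then have "frac (a - b) = a - b" using assms by (simp add: frac_eq)
  then show ?thesis using True by (simp add: PP_def)
next
  case False
  have f: "frac (a - b) = a - b + 1" using assms False
    by (subst frac_unique_iff) auto
  show ?thesis using False unfolding PP_def f by (simp add: power2_eq_square field_simps)
qed

lemma sorted_identity:
  fixes ys :: "real list"
  assumes "sorted ys" "set ys \<subseteq> {0..<1}" "length ys = m" "m \<ge> 1"
  shows "(\<Sum>i<m. \<Sum>j<m. PP (frac (ys!i - ys!j)))
     = 1/12 + (\<Sum>i<m. \<Sum>j<m. ((real m * ys!i - real i) - (real m * ys!j - real j))^2) / (2 * (real m)^2)"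
proof -
  define y where "y i = ys!i" for i
  define e where "e i = real m * y i - real i" for i
  have rng: "i < m \<Longrightarrow> 0 \<le> y i \<and> y i < 1" for i
    using assms(2,3) unfolding y_def by (auto dest!: nth_mem)
  have ord: "j \<le> i \<Longrightarrow> i < m \<Longrightarrow> y j \<le> y i" for i j
    using assms(1,3) unfolding y_def by (simp add: sorted_nth_mono)
  have t: "PP (frac (y i - y j)) = (y i - y j)^2/2 + 1/12 - (if j \<le> i then y i - y j else y j - y i)/2"
    if "i < m" "j < m" for i j
  proof -
    have "PP (frac (y i - y j)) = (y i - y j)^2/2 + 1/12 - (if y j \<le> y i then y i - y j else y j - y i)/2"
      using rng that by (intro PP_frac_sorted) auto
    also have "(if y j \<le> y i then y i - y j else y j - y i) = (if j \<le> i then y i - y j else y j - y i)"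
      using ord[of j i] ord[of i j] that by auto
    finally show ?thesis .
  qed
  have L: "(\<Sum>i<m. \<Sum>j<m. PP (frac (y i - y j)))
     = (\<Sum>i<m. \<Sum>j<m. (y i - y j)^2)/2 + (real m)^2/12
       - (\<Sum>i<m. \<Sum>j<m. if j \<le> i then y i - y j else y j - y i)/2"
    by (simp add: t sum.distrib sum_subtractf sum_divide_distrib power2_eq_square)
  have R: "(\<Sum>i<m. \<Sum>j<m. (e i - e j)^2) = 2 * real m * (\<Sum>i<m. (e i)^2) - 2 * (\<Sum>i<m. e i)^2"
    by (rule sum_sq_diff)
  have Se: "(\<Sum>i<m. e i) = real m * (\<Sum>i<m. y i) - real m * (real m - 1) / 2"
    by (simp add: e_def sum_subtractf sum_distrib_left sum_id_real)
  have Se2: "(\<Sum>i<m. (e i)^2) = (real m)^2 * (\<Sum>i<m. (y i)^2) - 2 * real m * (\<Sum>i<m. real i * y i)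
       + real m * (real m - 1) * (2 * real m - 1) / 6"
    by (simp add: e_def power2_eq_square algebra_simps sum.distrib sum_subtractf sum_distrib_left
        sum_sq_real[unfolded power2_eq_square])
  have A: "(\<Sum>i<m. (2 * real i - real m + 1) * y i) = 2 * (\<Sum>i<m. real i * y i) - (real m - 1) * (\<Sum>i<m. y i)"
    by (simp add: algebra_simps sum.distrib sum_subtractf sum_distrib_left)
  have mpos: "real m > 0" using assms by simp
  have "(\<Sum>i<m. \<Sum>j<m. PP (frac (y i - y j))) = 1/12 + (\<Sum>i<m. \<Sum>j<m. (e i - e j)^2) / (2 * (real m)^2)"
    unfolding L R Se Se2 ord_abs_sum A sum_sq_diff using mpos
    by (simp add: field_simps) (simp add: algebra_simps power2_eq_square power4_eq_xxxx)
  then show ?thesis unfolding y_def e_def .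
qed

definition GG :: "real list \<Rightarrow> real" where
  "GG xs = sum_list (map (\<lambda>a. sum_list (map (\<lambda>b. PP (frac (a - b))) xs)) xs)"

lemma sum_list_map_sort: "sum_list (map (f::real\<Rightarrow>real) (sort xs)) = sum_list (map f (xs::real list))"
proof -
  have "mset (map f (sort xs)) = mset (map f xs)" by simp
  then have "sum_mset (mset (map f (sort xs))) = sum_mset (mset (map f xs))" by simp
  then show ?thesis by (simp only: sum_mset_sum_list)
qed

lemma GG_sort: "GG (sort xs) = GG xs"
  unfolding GG_def by (simp add: sum_list_map_sort)

lemma GG_nth: "GG xs = (\<Sum>i<length xs. \<Sum>j<length xs. PP (frac (xs!i - xs!j)))"
  unfolding GG_def by (simp add: sum_list_sum_nth atLeast0LessThan)

lemma GG_sorted_eq: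
  assumes "set xs \<subseteq> {0..<1}" "xs \<noteq> []"
  defines "ys \<equiv> sort xs" and "m \<equiv> length xs"
  shows "GG xs = 1/12 + (\<Sum>i<m. \<Sum>j<m. ((real m * ys!i - real i) - (real m * ys!j - real j))^2) / (2 * (real m)^2)"
proof -
  have "GG xs = GG ys" unfolding ys_def GG_sort ..
  also have "\<dots> = (\<Sum>i<m. \<Sum>j<m. PP (frac (ys!i - ys!j)))" unfolding GG_nth ys_def m_def by simp
  also have "\<dots> = 1/12 + (\<Sum>i<m. \<Sum>j<m. ((real m * ys!i - real i) - (real m * ys!j - real j))^2) / (2 * (real m)^2)"
    using assms by (intro sorted_identity) (auto simp: ys_def m_def Suc_le_eq)
  finally show ?thesis .
qed

lemma GG_ge:
  assumes "set xs \<subseteq> {0..<1}" "xs \<noteq> []"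
  shows "GG xs \<ge> 1/12"
  using GG_sorted_eq[OF assms] by (simp add: sum_nonneg)

lemma count_le: "count_in n r a b \<le> n"
proof -
  have "count_in n r a b \<le> card {..<n}" unfolding count_in_def
    by (rule card_mono) auto
  then show ?thesis by simp
qed

lemma bias_ge:
  assumes "0 \<le> a" "a \<le> b" "b \<le> 1"
  shows "\<bar>real (count_in n r a b) - real n * (b - a)\<bar> \<le> bias n r"
proof -
  have m: "(a, b) \<in> {(a, b). 0 \<le> a \<and> a \<le> b \<and> b \<le> 1}" using assms by simp
  have bd: "bdd_above ((\<lambda>ab. \<bar>real (count_in n r (fst ab) (snd ab)) - real n * (snd ab - fst ab)\<bar>) `
      {(a, b). 0 \<le> a \<and> a \<le> b \<and> b \<le> 1})"
  proof (rule bdd_aboveI2[where M = "real n"])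
    fix ab :: "real \<times> real" assume "ab \<in> {(a, b). 0 \<le> a \<and> a \<le> b \<and> b \<le> 1}"
    then obtain x y where xy: "ab = (x, y)" "0 \<le> x" "x \<le> y" "y \<le> 1" by auto
    have c: "real (count_in n r x y) \<le> real n" using count_le by simp
    have h1: "real n * (y - x) \<le> real n * 1" using xy by (intro mult_left_mono) auto
    have h0: "0 \<le> real n * (y - x)" using xy by simp
    have h2: "0 \<le> real (count_in n r x y)" by simp
    show "\<bar>real (count_in n r (fst ab) (snd ab)) - real n * (snd ab - fst ab)\<bar> \<le> real n"
      unfolding xy(1) fst_conv snd_conv abs_le_iff using c h0 h1 h2 by linarith
  qed
  from cSUP_upper[OF m bd] show ?thesis unfolding bias_def by simp
qed

lemma count_sorted:
  fixes r :: "nat \<Rightarrow> real" and n :: nat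
  defines "ys \<equiv> sort (map (\<lambda>i. frac (r i)) [0..<n])"
  shows "count_in n r a b = card {p. p < n \<and> ys!p \<in> {a..b}}"
proof -
  let ?xs = "map (\<lambda>i. frac (r i)) [0..<n]"
  let ?P = "\<lambda>z. z \<in> {a..b}"
  have "count_in n r a b = card {i. i < length ?xs \<and> ?P (?xs!i)}"
    unfolding count_in_def by (intro arg_cong[where f=card]) auto
  also have "\<dots> = length (filter ?P ?xs)" by (simp only: length_filter_conv_card)
  also have "\<dots> = length (filter ?P ys)"
  proof -
    have "mset (filter ?P ys) = mset (filter ?P ?xs)" unfolding ys_def by simp
    then show ?thesis by (metis mset_eq_length)
  qed
  also have "\<dots> = card {p. p < length ys \<and> ?P (ys!p)}" by (simp only: length_filter_conv_card)
  also have "length ys = n" unfolding ys_def by simp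
  finally show ?thesis .
qed

lemma bias_e_bounds:
  fixes r :: "nat \<Rightarrow> real" and n :: nat
  defines "ys \<equiv> sort (map (\<lambda>i. frac (r i)) [0..<n])"
  defines "e \<equiv> \<lambda>p. real n * ys!p - real p"
  assumes ij: "i < n" "j < n"
  shows "1 \<le> bias n r" and "(e i - e j)^2 \<le> (bias n r - 1)^2"
proof -
  define B where "B = bias n r"
  have len: "length ys = n" unfolding ys_def by simp
  have srt: "sorted ys" unfolding ys_def by simp
  have rng: "p < n \<Longrightarrow> 0 \<le> ys!p \<and> ys!p < 1" for p
  proof -
    assume "p < n"
    then have "ys!p \<in> set ys" using len by simp
    then have "ys!p \<in> set (map (\<lambda>i. frac (r i)) [0..<n])" unfolding ys_def by simp
    then show ?thesis by (auto simp: frac_lt_1)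
  qed
  have mono: "p \<le> q \<Longrightarrow> q < n \<Longrightarrow> ys!p \<le> ys!q" for p q
    using srt len by (simp add: sorted_nth_mono)
  have L1: "e j' - e i' + 1 \<le> B" if "j' \<le> i'" "i' < n" for i' j'
  proof -
    have "{j'..i'} \<subseteq> {p. p < n \<and> ys!p \<in> {ys!j'..ys!i'}}"
      using that mono by auto
    then have "card {j'..i'} \<le> card {p. p < n \<and> ys!p \<in> {ys!j'..ys!i'}}"
      by (intro card_mono) auto
    then have "i' - j' + 1 \<le> count_in n r (ys!j') (ys!i')"
      unfolding count_sorted[of n r, folded ys_def] using that by simp
    then have "real (i' - j' + 1) \<le> real (count_in n r (ys!j') (ys!i'))"
      by (simp only: of_nat_le_iff)
    then have c: "real i' - real j' + 1 \<le> real (count_in n r (ys!j') (ys!i'))"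
      using that by (simp add: of_nat_diff)
    have "\<bar>real (count_in n r (ys!j') (ys!i')) - real n * (ys!i' - ys!j')\<bar> \<le> B"
      unfolding B_def using rng[of j'] rng[of i'] that mono[of j' i'] by (intro bias_ge) auto
    then show ?thesis using c unfolding e_def by (simp add: algebra_simps)
  qed
  have B1: "1 \<le> B" using L1[of i i] ij by simp
  have L2: "e i' - e j' \<le> B - 1" if "j' < i'" "i' < n" for i' j'
  proof (cases "ys!j' = ys!i'")
    case True
    then show ?thesis using that B1 unfolding e_def by simp
  next
    case False
    then have lt: "ys!j' < ys!i'" using mono[of j' i'] that by simp
    show ?thesis
    proof (rule ccontr)
      assume neg: "\<not> ?thesis"
      define g where "g = e i' - e j' - (B - 1)"
      have g: "g > 0" unfolding g_def using neg by simp
      have npos: "real n > 0" using that by simp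
      define d where "d = min ((ys!i' - ys!j')/2) (g / (4 * real n))"
      have d0: "d > 0" unfolding d_def using lt g npos by simp
      have d1: "2 * d \<le> ys!i' - ys!j'" unfolding d_def by (simp add: min_def)
      have d2: "real n * d \<le> g / 4" unfolding d_def using npos by (simp add: field_simps min_def)
      define a where "a = ys!j' + d"
      define b where "b = ys!i' - d"
      have sub: "{p. p < n \<and> ys!p \<in> {a..b}} \<subseteq> {Suc j'..<i'}"
      proof
        fix p assume p: "p \<in> {p. p < n \<and> ys!p \<in> {a..b}}"
        have "\<not> p \<le> j'"
        proof
          assume "p \<le> j'" then have "ys!p \<le> ys!j'" using mono that by auto
          then show False using p d0 unfolding a_def by auto
        qed
        moreover have "\<not> i' \<le> p"
        proof
          assume "i' \<le> p" then have "ys!i' \<le> ys!p" using mono p by auto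
          then show False using p d0 unfolding b_def by auto
        qed
        ultimately show "p \<in> {Suc j'..<i'}" by simp
      qed
      then have "count_in n r a b \<le> card {Suc j'..<i'}"
        unfolding count_sorted[of n r, folded ys_def] by (intro card_mono) auto
      then have c: "real (count_in n r a b) \<le> real i' - real j' - 1"
        using that by (simp add: of_nat_diff)
      have "\<bar>real (count_in n r a b) - real n * (b - a)\<bar> \<le> B"
        unfolding B_def using rng[of j'] rng[of i'] that d0 d1 unfolding a_def b_def
        by (intro bias_ge) auto
      then have "real n * (b - a) - real (count_in n r a b) \<le> B" by simp
      then have "real n * (ys!i' - ys!j') - 2 * (real n * d) - (real i' - real j' - 1) \<le> B"
        using c unfolding a_def b_def by (simp add: algebra_simps)
      then show False using d2 g unfolding g_def e_def by (simp add: algebra_simps)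
    qed
  qed
  show "1 \<le> bias n r" using B1 B_def by simp
  have "\<bar>e i - e j\<bar> \<le> B - 1"
  proof (cases "j \<le> i")
    case True
    show ?thesis
    proof (cases "j = i")
      case True then show ?thesis using B1 by simp
    next
      case False
      then show ?thesis using L2[of j i] L1[of j i] True ij by auto
    qed
  next
    case False
    then show ?thesis using L2[of i j] L1[of i j] ij by auto
  qed
  then have "\<bar>e i - e j\<bar>^2 \<le> (B - 1)^2" by (intro power_mono) auto
  then show "(e i - e j)^2 \<le> (bias n r - 1)^2" unfolding B_def by simp
qed

definition RR :: "real \<Rightarrow> real" where "RR y = y^3/6 - y^2/4 + y/12"

lemma RR_deriv: "(RR has_real_derivative PP y) (at y)"
  unfolding RR_def PP_def by (auto intro!: derivative_eq_intros simp: field_simps power2_eq_square)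

definition hh :: "real \<Rightarrow> real" where "hh y = (if y < 0 then y^2/2 else 0)"

lemma hh_deriv: "(hh has_real_derivative 0) (at 0)"
proof -
  have "((\<lambda>y. min y 0 / 2) \<longlongrightarrow> min 0 0 / 2) (at (0::real))"
    by (intro tendsto_intros) simp_all
  then have lim: "((\<lambda>y. min y 0 / 2) \<longlongrightarrow> 0) (at (0::real))" by simp
  have ev: "\<forall>\<^sub>F y in at 0. min y 0 / 2 = (hh y - hh 0) / (y - 0)"
    unfolding eventually_at_filter
    by (auto simp: hh_def min_def power2_eq_square)
  show ?thesis unfolding has_field_derivative_iff
    using tendsto_cong[OF ev] lim by simp
qed

lemma RR_shift: "RR (y + 1) = RR y + y^2/2"
  unfolding RR_def by (simp add: field_simps power2_eq_square power3_eq_cube)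

lemma Rf_deriv: "((\<lambda>u. RR (frac u)) has_real_derivative PP (frac u)) (at u)"
proof (cases "u \<in> \<int>")
  case False
  define m where "m = \<lfloor>u\<rfloor>"
  have d: "((\<lambda>x. RR (x - of_int m)) has_real_derivative PP (u - of_int m) * 1) (at u)"
    by (rule DERIV_chain2[OF RR_deriv]) (auto intro!: derivative_eq_intros)
  have fu: "frac u = u - of_int m" unfolding m_def frac_def by simp
  have in1: "u \<in> {of_int m <..< of_int m + 1}"
    using False fu frac_lt_1[of u] frac_ge_0[of u] frac_gt_0_iff[of u]
    by (auto simp del: frac_gt_0_iff)
  show ?thesis
  proof (rule has_field_derivative_transform_within_open[OF _ _ in1])
    show "((\<lambda>x. RR (x - of_int m)) has_real_derivative PP (frac u)) (at u)" using d fu by simp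
    show "open {real_of_int m<..<real_of_int m + 1}" by simp
    fix x assume x: "x \<in> {real_of_int m<..<real_of_int m + 1}"
    have "frac x = x - of_int m"
      using x by (subst frac_unique_iff) (auto simp: Ints_def)
    then show "RR (x - real_of_int m) = RR (frac x)" by simp
  qed
next
  case True
  then obtain m where um: "u = of_int m" by (auto elim: Ints_cases)
  have d1: "((\<lambda>x. RR (x - of_int m)) has_real_derivative PP (u - of_int m) * 1) (at u)"
    by (rule DERIV_chain2[OF RR_deriv]) (auto intro!: derivative_eq_intros)
  have d2: "((\<lambda>x. hh (x - of_int m)) has_real_derivative 0 * 1) (at u)"
    by (rule DERIV_chain2) (auto simp: um intro!: derivative_eq_intros hh_deriv)
  have d: "((\<lambda>x. RR (x - of_int m) + hh (x - of_int m)) has_real_derivative PP (frac u)) (at u)"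
    using DERIV_add[OF d1 d2] um by simp
  have in1: "u \<in> {of_int m - 1 <..< of_int m + 1}" using um by simp
  show ?thesis
  proof (rule has_field_derivative_transform_within_open[OF d _ in1])
    show "open {real_of_int m - 1<..<real_of_int m + 1}" by simp
    fix x assume x: "x \<in> {real_of_int m - 1<..<real_of_int m + 1}"
    show "RR (x - of_int m) + hh (x - of_int m) = RR (frac x)"
    proof (cases "x < of_int m")
      case True
      have ii: "x - ((x - of_int m) + 1) \<in> \<int>"
      proof -
        have "x - ((x - of_int m) + 1) = of_int (m - 1)" by simp
        then show ?thesis by (metis Ints_of_int)
      qed
      have "frac x = (x - of_int m) + 1"
        using x True ii by (subst frac_unique_iff) auto
      then show ?thesis using True by (simp add: RR_shift hh_def)
    next
      case False
      have "frac x = x - of_int m"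
        using x False by (subst frac_unique_iff) (auto simp: Ints_def)
      then show ?thesis using False by (simp add: hh_def)
    qed
  qed
qed

lemma RR_bound: "0 \<le> y \<Longrightarrow> y \<le> 1 \<Longrightarrow> \<bar>RR y\<bar> \<le> 1/2"
proof -
  assume y: "0 \<le> y" "y \<le> 1"
  have "y^2 \<le> 1" "y^3 \<le> 1" "0 \<le> y^2" "0 \<le> y^3" using y by (auto intro: power_le_one)
  then have "-1/2 \<le> RR y" "RR y \<le> 1/2" unfolding RR_def using y by linarith+
  then show ?thesis by (simp add: abs_le_iff)
qed

lemma avg_exists:
  fixes c d :: "'a \<Rightarrow> real"
  assumes fin: "finite I" and dnz: "\<And>i. i \<in> I \<Longrightarrow> d i \<noteq> 0" and eps: "\<epsilon> > 0"
  shows "\<exists>t. (\<Sum>i\<in>I. PP (frac (c i + d i * t))) \<ge> - \<epsilon>"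
proof (rule ccontr)
  assume "\<not> ?thesis"
  then have neg: "\<And>t. (\<Sum>i\<in>I. PP (frac (c i + d i * t))) < - \<epsilon>" by (simp add: not_le)
  define C where "C = (\<Sum>i\<in>I. 1 / \<bar>d i\<bar>)"
  have C0: "C \<ge> 0" unfolding C_def by (simp add: sum_nonneg)
  define T where "T = (C + 1) / \<epsilon>"
  have T0: "T \<ge> 0" unfolding T_def using C0 eps by simp
  define F where "F i t = RR (frac (c i + d i * t)) / d i" for i t
  have Fd: "(F i has_real_derivative PP (frac (c i + d i * t))) (at t)" if "i \<in> I" for i t
  proof -
    have "((\<lambda>t. RR (frac (c i + d i * t))) has_real_derivative PP (frac (c i + d i * t)) * d i) (at t)"
      by (rule DERIV_chain2[OF Rf_deriv]) (auto intro!: derivative_eq_intros)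
    then have "((\<lambda>t. RR (frac (c i + d i * t)) / d i) has_real_derivative PP (frac (c i + d i * t)) * d i / d i) (at t)"
      by (rule DERIV_cdivide)
    then show ?thesis unfolding F_def using dnz[OF that] by simp
  qed
  have int: "((\<lambda>t. PP (frac (c i + d i * t))) has_integral (F i T - F i 0)) {0..T}" if "i \<in> I" for i
    using T0 Fd[OF that]
    by (intro fundamental_theorem_of_calculus)
       (auto simp: has_real_derivative_iff_has_vector_derivative intro: has_vector_derivative_at_within)
  have sint: "((\<lambda>t. \<Sum>i\<in>I. PP (frac (c i + d i * t))) has_integral (\<Sum>i\<in>I. F i T - F i 0)) {0..T}"
    by (rule has_integral_sum[OF fin int])
  have cint: "((\<lambda>t. - \<epsilon>) has_integral (T * (- \<epsilon>))) {0..T}"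
    using has_integral_const_real[of "- \<epsilon>" 0 T] T0 by simp
  have le1: "(\<Sum>i\<in>I. F i T - F i 0) \<le> T * (- \<epsilon>)"
    by (rule has_integral_le[OF sint cint]) (use neg in \<open>simp add: less_imp_le\<close>)
  have "T * (- \<epsilon>) = - (C + 1)" using T0 eps unfolding T_def by simp
  then have le2: "(\<Sum>i\<in>I. F i T - F i 0) \<le> - (C + 1)" using le1 by simp
  have bnd: "\<bar>F i T - F i 0\<bar> \<le> 1 / \<bar>d i\<bar>" if "i \<in> I" for i
  proof -
    have "\<bar>RR (frac (c i + d i * T)) - RR (frac (c i + d i * 0))\<bar> \<le> 1"
      using RR_bound[of "frac (c i + d i * T)"] RR_bound[of "frac (c i + d i * 0)"]
      by (simp add: less_imp_le[OF frac_lt_1])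
    then show ?thesis unfolding F_def using dnz[OF that]
      by (simp add: diff_divide_distrib[symmetric] abs_divide divide_right_mono)
  qed
  have "- C \<le> (\<Sum>i\<in>I. F i T - F i 0)"
  proof -
    have "(\<Sum>i\<in>I. - (1 / \<bar>d i\<bar>)) \<le> (\<Sum>i\<in>I. F i T - F i 0)"
    proof (intro sum_mono)
      fix i assume "i \<in> I"
      from bnd[OF this] show "- (1 / \<bar>d i\<bar>) \<le> F i T - F i 0" by (simp add: abs_le_iff)
    qed
    then show ?thesis unfolding C_def by (simp add: sum_negf)
  qed
  then show False using le2 by simp
qed

lemma frac_frac_diff: "frac (frac a - frac b) = frac (a - b)"
proof -
  have "frac a - frac b = (a - b) + of_int (\<lfloor>b\<rfloor> - \<lfloor>a\<rfloor>)" by (simp add: frac_def)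
  then show ?thesis by (simp only: frac_add_of_int_right)
qed

lemma group_sum:
  fixes n :: nat and s v :: "nat \<Rightarrow> real"
  assumes "\<And>i. i < n \<Longrightarrow> 0 \<le> s i \<and> s i < 1" "w \<in> v ` {..<n}"
  shows "(\<Sum>p\<in>{i. i < n \<and> v i = w} \<times> {i. i < n \<and> v i = w}. PP (frac (s (fst p) - s (snd p)))) \<ge> 1/12"
proof -
  define L where "L = filter (\<lambda>i. v i = w) [0..<n]"
  have setL: "set L = {i. i < n \<and> v i = w}" unfolding L_def by auto
  have dL: "distinct L" unfolding L_def by simp
  have e1: "GG (map s L) = (\<Sum>i\<in>set L. \<Sum>j\<in>set L. PP (frac (s i - s j)))"
    unfolding GG_def map_map o_def using dL by (simp only: sum_list_distinct_conv_sum_set)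
  have e2: "(\<Sum>i\<in>set L. \<Sum>j\<in>set L. PP (frac (s i - s j))) = (\<Sum>p\<in>set L \<times> set L. PP (frac (s (fst p) - s (snd p))))"
    by (simp only: sum.cartesian_product' fst_conv snd_conv)
  have eq0: "GG (map s L) = (\<Sum>p\<in>set L \<times> set L. PP (frac (s (fst p) - s (snd p))))"
    using e1 e2 by (rule trans)
  have eq: "GG (map s L) = (\<Sum>p\<in>{i. i < n \<and> v i = w} \<times> {i. i < n \<and> v i = w}. PP (frac (s (fst p) - s (snd p))))"
    using eq0 unfolding setL .
  have "map s L \<noteq> []"
  proof -
    obtain i where "i < n" "w = v i" using assms(2) by auto
    then have "i \<in> set L" unfolding setL by simp
    then show ?thesis by auto
  qed
  moreover have "set (map s L) \<subseteq> {0..<1}"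
  proof
    fix z assume "z \<in> set (map s L)"
    then obtain i where "i \<in> set L" "z = s i" by auto
    then show "z \<in> {0..<1}" using assms(1) unfolding setL by auto
  qed
  ultimately have "GG (map s L) \<ge> 1/12" by (rule GG_ge[rotated])
  then show ?thesis unfolding eq .
qed

theorem theorem2p1:
  fixes n :: nat and s v :: "nat \<Rightarrow> real"
  assumes "n \<ge> 1"
    and "\<And>i. i < n \<Longrightarrow> 0 \<le> s i \<and> s i < 1"
  shows "\<exists>t :: real. bias n (\<lambda>i. s i + v i * t) \<ge> sqrt (real (card (v ` {..<n})) / 12)"
proof -
  define Pairs where "Pairs = {..<n} \<times> {..<n}"
  define Cross where "Cross = {p \<in> Pairs. v (fst p) \<noteq> v (snd p)}"
  define Same where "Same = {p \<in> Pairs. \<not> v (fst p) \<noteq> v (snd p)}"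
  define V where "V = v ` {..<n}"
  define k where "k = card V"
  define G where "G w = {i. i < n \<and> v i = w}" for w
  have finP: "finite Pairs" unfolding Pairs_def by simp
  have finC: "finite Cross" unfolding Cross_def using finP by simp
  obtain t where t: "(\<Sum>p\<in>Cross. PP (frac ((s (fst p) - s (snd p)) + (v (fst p) - v (snd p)) * t))) \<ge> - (1/12)"
    using avg_exists[OF finC, of "\<lambda>p. v (fst p) - v (snd p)" "1/12" "\<lambda>p. s (fst p) - s (snd p)"]
    unfolding Cross_def by auto
  define r where "r i = s i + v i * t" for i
  define x where "x i = frac (r i)" for i
  define xs where "xs = map x [0..<n]"
  define g where "g p = PP (frac (x (fst p) - x (snd p)))" for p
  have gr: "g p = PP (frac (r (fst p) - r (snd p)))" for p
    unfolding g_def x_def frac_frac_diff ..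
  have Q: "GG xs = (\<Sum>p\<in>Pairs. g p)"
    unfolding GG_nth xs_def Pairs_def g_def by (simp add: sum.cartesian_product')
  have split: "(\<Sum>p\<in>Pairs. g p) = (\<Sum>p\<in>Same. g p) + (\<Sum>p\<in>Cross. g p)"
  proof -
    have "(\<Sum>p\<in>Pairs. g p) = (\<Sum>p\<in>Pairs. (if \<not> v (fst p) \<noteq> v (snd p) then g p else 0)
             + (if v (fst p) \<noteq> v (snd p) then g p else 0))"
      by (intro sum.cong) auto
    also have "\<dots> = (\<Sum>p\<in>Same. g p) + (\<Sum>p\<in>Cross. g p)"
      unfolding Same_def Cross_def sum.distrib using finP by (simp only: sum.inter_filter)
    finally show ?thesis .
  qed
  have cross: "(\<Sum>p\<in>Cross. g p) \<ge> - (1/12)"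
  proof -
    have "(\<Sum>p\<in>Cross. g p) = (\<Sum>p\<in>Cross. PP (frac ((s (fst p) - s (snd p)) + (v (fst p) - v (snd p)) * t)))"
      by (intro sum.cong refl) (simp add: gr r_def algebra_simps)
    then show ?thesis using t by simp
  qed
  have SameU: "Same = (\<Union>w\<in>V. G w \<times> G w)"
    unfolding Same_def Pairs_def V_def G_def by fastforce
  have same: "(\<Sum>p\<in>Same. g p) \<ge> real k / 12"
  proof -
    have "(\<Sum>p\<in>Same. g p) = (\<Sum>w\<in>V. \<Sum>p\<in>G w \<times> G w. g p)"
      unfolding SameU
    proof (rule sum.UNION_disjoint)
      show "finite V" unfolding V_def by simp
      show "\<forall>w\<in>V. finite (G w \<times> G w)" unfolding G_def by simp
      show "\<forall>w1\<in>V. \<forall>w2\<in>V. w1 \<noteq> w2 \<longrightarrow> (G w1 \<times> G w1) \<inter> (G w2 \<times> G w2) = {}"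
        unfolding G_def by blast
    qed
    also have "\<dots> = (\<Sum>w\<in>V. \<Sum>p\<in>G w \<times> G w. PP (frac (s (fst p) - s (snd p))))"
      by (intro sum.cong refl) (auto simp: gr r_def G_def algebra_simps)
    also have "\<dots> \<ge> (\<Sum>w\<in>V. 1/12)"
    proof (intro sum_mono)
      fix w assume "w \<in> V"
      then have wV: "w \<in> v ` {..<n}" unfolding V_def .
      show "1/12 \<le> (\<Sum>p\<in>G w \<times> G w. PP (frac (s (fst p) - s (snd p))))"
        using group_sum[OF assms(2) wV] unfolding G_def .
    qed
    finally show ?thesis unfolding k_def by simp
  qed
  define B where "B = bias n r"
  define ys where "ys = sort xs"
  have xs_rng: "set xs \<subseteq> {0..<1}" unfolding xs_def x_def by (auto simp: frac_lt_1)
  have xs_ne: "xs \<noteq> []" unfolding xs_def using assms(1) by simp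
  have lxs: "length xs = n" unfolding xs_def by simp
  have eqG: "GG xs = 1/12 + (\<Sum>i<n. \<Sum>j<n. ((real n * ys!i - real i) - (real n * ys!j - real j))^2) / (2 * (real n)^2)"
    using GG_sorted_eq[OF xs_rng xs_ne] unfolding ys_def lxs .
  have ysd: "ys = sort (map (\<lambda>i. frac (r i)) [0..<n])" unfolding ys_def xs_def x_def ..
  have B1: "1 \<le> B" unfolding B_def using bias_e_bounds(1)[of 0 n 0 r] assms(1) by simp
  have tb: "((real n * ys!i - real i) - (real n * ys!j - real j))^2 \<le> (B - 1)^2" if "i < n" "j < n" for i j
    using bias_e_bounds(2)[OF that, of r] unfolding ysd B_def by simp
  have "(\<Sum>i<n. \<Sum>j<n. ((real n * ys!i - real i) - (real n * ys!j - real j))^2) \<le> (\<Sum>i<n. \<Sum>j<n. (B - 1)^2)"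
    using tb by (intro sum_mono) auto
  also have "\<dots> = (real n)^2 * (B - 1)^2" by (simp add: power2_eq_square)
  finally have Sb: "(\<Sum>i<n. \<Sum>j<n. ((real n * ys!i - real i) - (real n * ys!j - real j))^2) \<le> (real n)^2 * (B - 1)^2" .
  have npos: "(real n)^2 > 0" using assms(1) by simp
  have Qub: "GG xs \<le> 1/12 + (B - 1)^2 / 2"
  proof -
    have "(\<Sum>i<n. \<Sum>j<n. ((real n * ys!i - real i) - (real n * ys!j - real j))^2) / (2 * (real n)^2)
        \<le> (real n)^2 * (B - 1)^2 / (2 * (real n)^2)"
      using Sb npos by (intro divide_right_mono) auto
    also have "\<dots> = (B - 1)^2 / 2" using npos by simp
    finally show ?thesis unfolding eqG by simp
  qed
  have Qlb: "GG xs \<ge> real k / 12 - 1/12" using Q split cross same by simp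
  have "(B - 1)^2 \<ge> (real k - 2) / 6" using Qub Qlb by simp
  have "B^2 \<ge> real k / 12"
  proof -
    define X where "X = (B - 1)^2"
    have hx: "real k - 2 \<le> 6 * X" using \<open>(B - 1)^2 \<ge> (real k - 2) / 6\<close> unfolding X_def by simp
    have hy: "12 * B^2 = 12 * X + 24 * B - 12" unfolding X_def by (simp add: power2_eq_square algebra_simps)
    have "real k \<le> 12 * B^2" unfolding hy using hx B1 by simp
    then show ?thesis by simp
  qed
  then have "sqrt (real k / 12) \<le> sqrt (B^2)" by (rule real_sqrt_le_mono)
  also have "\<dots> = B" using B1 by simp
  finally show ?thesis unfolding B_def r_def k_def V_def by blast
qed

end
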